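(* Let $d\geq1$ be an integer, $\frac{d}{d+2}<q<1$, and set $m=\frac{2}{1-q}-d$ (so that $-\frac{m+d}{2}=\frac{1}{q-1}$ and $m>2$). For $a_1,\dots,a_d>0$ define on $\mathbb{Z}^d$ $$p_{k_1,\dots,k_d}=f_{m,d}(a_1,\dots,a_d)^{-1}\Big(1+\sum_{i=1}^d\frac{k_i^2}{a_i^2}\Big)^{-\frac{m+d}{2}},\qquad f_{m,d}(a_1,\dots,a_d)=\sum_{(k_1,\dots,k_d)\in\mathbb{Z}^d}\Big(1+\sum_{i=1}^d\frac{k_i^2}{a_i^2}\Big)^{-\frac{m+d}{2}}.$$ Let $u_i^2=\sum_{k\in\mathbb{Z}^d}k_i^2p_k$, $i=1,\dots,d$. Then (a) $p$ maximizes the $d$-variate Tsallis entropy $H_q(p)=\frac{1}{q-1}\big(1-\sum_{k\in\mathbb{Z}^d}p_k^q\big)$ among all probability distributions on $\mathbb{Z}^d$ with $\sum_kk_ip_k=0$ and $\sum_kk_i^2p_k=u_i^2$ for all $i$; and (b) as $\min_ia_i\to\infty$, $$\frac{f_{m,d}(a_1,\dots,a_d)}{\prod_{i=1}^da_i}\to\frac{\pi^{d/2}\,\Gamma(\frac m2)}{\Gamma(\frac{m+d}{2})}.$$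
   Context: $\Gamma$ is the Euler Gamma function. *)

theory Defs
  imports "HOL-Analysis.Analysis"
begin

text \<open>Points of Z^d are vectors int^'n, with d = CARD('n).\<close>

definition quad_form :: "real^'n \<Rightarrow> int^'n \<Rightarrow> real" where
  "quad_form a k = 1 + (\<Sum>i\<in>UNIV. (real_of_int (k$i))^2 / (a$i)^2)"

definition f_md :: "real \<Rightarrow> real^'n \<Rightarrow> real" where
  "f_md m a = (\<Sum>\<^sub>\<infinity>k::int^'n. quad_form a k powr (-(m + real CARD('n)) / 2))"

definition p_md :: "real \<Rightarrow> real^'n \<Rightarrow> int^'n \<Rightarrow> real" where
  "p_md m a k = quad_form a k powr (-(m + real CARD('n)) / 2) / f_md m a"

definition tsallis :: "real \<Rightarrow> (int^'n \<Rightarrow> real) \<Rightarrow> real" where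
  "tsallis q p = 1 / (q - 1) * (1 - (\<Sum>\<^sub>\<infinity>k. p k powr q))"

definition feasible :: "real^'n \<Rightarrow> (int^'n \<Rightarrow> real) \<Rightarrow> bool" where
  "feasible u2 p \<longleftrightarrow> (\<forall>k. p k \<ge> 0) \<and> (p has_sum 1) UNIV \<and>
     (\<forall>i. ((\<lambda>k. real_of_int (k$i) * p k) has_sum 0) UNIV \<and>
          ((\<lambda>k. (real_of_int (k$i))^2 * p k) has_sum (u2$i)) UNIV)"

end

theory Submission
  imports Defs "HOL-Probability.Distributions"
begin


lemma step_suminf:
  fixes c :: "nat \<Rightarrow> ennreal" and t :: real
  shows "(\<Sum>n. ennreal (indicator {real n..<real n + 1} t) * c n) = (if 0 \<le> t then c (nat \<lfloor>t\<rfloor>) else 0)"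
proof -
  have mem: "t \<in> {real n..<real n + 1} \<longleftrightarrow> 0 \<le> t \<and> n = nat \<lfloor>t\<rfloor>" for n
  proof
    assume "t \<in> {real n..<real n + 1}"
    then have "\<lfloor>t\<rfloor> = int n" by (simp add: floor_eq_iff)
    then show "0 \<le> t \<and> n = nat \<lfloor>t\<rfloor>" using \<open>t \<in> _\<close> by auto
  next
    assume "0 \<le> t \<and> n = nat \<lfloor>t\<rfloor>"
    then show "t \<in> {real n..<real n + 1}" by auto
  qed
  show ?thesis
  proof (cases "0 \<le> t")
    case True
    have "(\<Sum>n. ennreal (indicator {real n..<real n + 1} t) * c n) =
        (\<Sum>n\<in>{nat \<lfloor>t\<rfloor>}. ennreal (indicator {real n..<real n + 1} t) * c n)"
      by (rule suminf_finite) (auto simp: mem indicator_def simp del: atLeastLessThan_iff)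
    also have "\<dots> = c (nat \<lfloor>t\<rfloor>)"
    proof -
      have "t \<in> {real (nat \<lfloor>t\<rfloor>)..<real (nat \<lfloor>t\<rfloor>) + 1}" using mem True by blast
      then have "indicator {real (nat \<lfloor>t\<rfloor>)..<real (nat \<lfloor>t\<rfloor>) + 1} t = (1::real)"
        by (rule indicator_simps)
      then show ?thesis by simp
    qed
    finally show ?thesis using True by simp
  next
    case False
    then show ?thesis by (simp add: mem indicator_def del: atLeastLessThan_iff)
  qed
qed

lemma gauss_half:
  fixes y :: real assumes y: "y > 0"
  shows "(\<integral>\<^sup>+t. ennreal (indicator {0..} t * exp (-(y * t\<^sup>2))) \<partial>lborel) = ennreal (sqrt (pi / y) / 2)"
proof -
  have H: "(\<integral>\<^sup>+u. ennreal (indicator {0..} u *\<^sub>R exp (- u\<^sup>2)) \<partial>lborel) = ennreal (sqrt pi / 2)"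
    using gaussian_moment_0 unfolding has_bochner_integral_iff
    by (subst nn_integral_eq_integral) (auto simp: indicator_def)
  have "(\<integral>\<^sup>+u. ennreal (indicator {0..} u *\<^sub>R exp (- u\<^sup>2)) \<partial>lborel) =
      ennreal \<bar>sqrt y\<bar> * (\<integral>\<^sup>+x. ennreal (indicator {0..} (0 + sqrt y * x) *\<^sub>R exp (- (0 + sqrt y * x)\<^sup>2)) \<partial>lborel)"
    by (rule nn_integral_real_affine) (use y in auto)
  also have "(\<lambda>x. ennreal (indicator {0..} (0 + sqrt y * x) *\<^sub>R exp (- (0 + sqrt y * x)\<^sup>2))) =
      (\<lambda>x. ennreal (indicator {0..} x * exp (-(y * x\<^sup>2))))"
    using y by (auto simp: fun_eq_iff indicator_def power_mult_distrib zero_le_mult_iff)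
  finally have "ennreal (sqrt y) * (\<integral>\<^sup>+t. ennreal (indicator {0..} t * exp (-(y * t\<^sup>2))) \<partial>lborel) = ennreal (sqrt pi / 2)"
    using H y by simp
  then have "ennreal (1 / sqrt y) * (ennreal (sqrt y) * (\<integral>\<^sup>+t. ennreal (indicator {0..} t * exp (-(y * t\<^sup>2))) \<partial>lborel))
     = ennreal (1 / sqrt y) * ennreal (sqrt pi / 2)" by simp
  also have "ennreal (1 / sqrt y) * (ennreal (sqrt y) * X) = X" for X
    using y by (simp add: mult.assoc[symmetric] ennreal_mult[symmetric])
  also have "ennreal (1 / sqrt y) * ennreal (sqrt pi / 2) = ennreal (sqrt (pi / y) / 2)"
    using y by (simp add: ennreal_mult[symmetric] real_sqrt_divide)
  finally show ?thesis .
qed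

definition Th :: "real \<Rightarrow> ennreal" where
  "Th y = (\<integral>\<^sup>+k. ennreal (exp (-(y * (real_of_int k)\<^sup>2))) \<partial>count_space (UNIV::int set))"

lemma Th_split:
  "Th y = (\<Sum>n. ennreal (exp (-(y * (real n)\<^sup>2)))) + (\<Sum>n. ennreal (exp (-(y * (real (Suc n))\<^sup>2))))"
proof -
  define h where "h k = ennreal (exp (-(y * (real_of_int k)\<^sup>2)))" for k :: int
  define A where "A = range (int :: nat \<Rightarrow> int)"
  define B where "B = range (\<lambda>n::nat. - int (Suc n))"
  have AB: "indicator A k + indicator B k = (1::ennreal)" for k
  proof (cases "k \<ge> 0")
    case True
    then have "k \<in> A" "k \<notin> B" unfolding A_def B_def by (auto intro: range_eqI[of _ _ "nat k"])
    then show ?thesis by simp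
  next
    case False
    then have "k \<notin> A" "k \<in> B" unfolding A_def B_def by (auto intro!: range_eqI[of _ _ "nat (-k) - 1"])
    then show ?thesis by simp
  qed
  have "Th y = (\<integral>\<^sup>+k. h k * indicator A k + h k * indicator B k \<partial>count_space UNIV)"
    unfolding Th_def h_def by (intro nn_integral_cong) (metis AB distrib_left mult.right_neutral)
  also have "\<dots> = (\<integral>\<^sup>+k. h k * indicator A k \<partial>count_space UNIV) + (\<integral>\<^sup>+k. h k * indicator B k \<partial>count_space UNIV)"
    by (rule nn_integral_add) auto
  also have "(\<integral>\<^sup>+k. h k * indicator A k \<partial>count_space UNIV) = (\<integral>\<^sup>+k. h k \<partial>count_space A)"
    by (simp add: nn_integral_count_space_indicator A_def)
  also have "\<dots> = (\<integral>\<^sup>+n. h (int n) \<partial>count_space UNIV)"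
    unfolding A_def by (rule nn_integral_bij_count_space[symmetric]) (simp add: bij_betw_def)
  also have "\<dots> = (\<Sum>n. ennreal (exp (-(y * (real n)\<^sup>2))))"
    by (simp add: nn_integral_count_space_nat h_def)
  also have "(\<integral>\<^sup>+k. h k * indicator B k \<partial>count_space UNIV) = (\<integral>\<^sup>+k. h k \<partial>count_space B)"
    by (simp add: nn_integral_count_space_indicator B_def)
  also have "\<dots> = (\<integral>\<^sup>+n. h (- int (Suc n)) \<partial>count_space UNIV)"
    unfolding B_def by (rule nn_integral_bij_count_space[symmetric]) (simp add: bij_betw_def inj_on_def)
  also have "\<dots> = (\<Sum>n. ennreal (exp (-(y * (real (Suc n))\<^sup>2))))"
    by (simp add: nn_integral_count_space_nat h_def power2_eq_square algebra_simps)
  finally show ?thesis .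
qed

lemma ennreal_suminf_Suc:
  fixes g :: "nat \<Rightarrow> ennreal"
  shows "(\<Sum>n. g n) = g 0 + (\<Sum>n. g (Suc n))"
proof -
  have "(\<lambda>n. g (Suc n)) sums (\<Sum>n. g (Suc n))" by (rule summable_sums) simp
  then have "g sums ((\<Sum>n. g (Suc n)) + g 0)" by (rule sums_Suc)
  then show ?thesis by (simp add: sums_iff add.commute)
qed

lemma Th_int_upper:
  fixes y :: real assumes y: "y > 0"
  shows "(\<integral>\<^sup>+t. ennreal (indicator {0..} t * exp (-(y * t\<^sup>2))) \<partial>lborel) \<le> (\<Sum>n. ennreal (exp (-(y * (real n)\<^sup>2))))"
proof -
  define g where "g n = ennreal (exp (-(y * (real n)\<^sup>2)))" for n :: nat
  have "(\<integral>\<^sup>+t. ennreal (indicator {0..} t * exp (-(y * t\<^sup>2))) \<partial>lborel) \<le>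
        (\<integral>\<^sup>+t. (\<Sum>n. ennreal (indicator {real n..<real n + 1} t) * g n) \<partial>lborel)"
  proof (rule nn_integral_mono)
    fix t :: real
    show "ennreal (indicator {0..} t * exp (-(y * t\<^sup>2))) \<le> (\<Sum>n. ennreal (indicator {real n..<real n + 1} t) * g n)"
    proof (cases "0 \<le> t")
      case True
      have "real (nat \<lfloor>t\<rfloor>) \<le> t" using True by linarith
      then have "(real (nat \<lfloor>t\<rfloor>))\<^sup>2 \<le> t\<^sup>2" by (intro power_mono) auto
      then have "exp (-(y * t\<^sup>2)) \<le> exp (-(y * (real (nat \<lfloor>t\<rfloor>))\<^sup>2))"
        using y by (simp add: mult_left_mono)
      then show ?thesis using True by (simp add: step_suminf g_def)
    next
      case False
      then show ?thesis by (simp add: step_suminf)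
    qed
  qed
  also have "\<dots> = (\<Sum>n. \<integral>\<^sup>+t. ennreal (indicator {real n..<real n + 1} t) * g n \<partial>lborel)"
    by (rule nn_integral_suminf) auto
  also have "\<dots> = (\<Sum>n. g n)"
  proof -
    have "(\<integral>\<^sup>+t. ennreal (indicator {real n..<real n + 1} t) * g n \<partial>lborel) = g n" for n
      by (subst mult.commute, simp add: ennreal_indicator nn_integral_cmult_indicator)
    then show ?thesis by simp
  qed
  finally show ?thesis unfolding g_def .
qed

lemma Th_int_lower:
  fixes y :: real assumes y: "y > 0"
  shows "(\<Sum>n. ennreal (exp (-(y * (real (Suc n))\<^sup>2)))) \<le> (\<integral>\<^sup>+t. ennreal (indicator {0..} t * exp (-(y * t\<^sup>2))) \<partial>lborel)"
proof -
  define g where "g n = ennreal (exp (-(y * (real (Suc n))\<^sup>2)))" for n :: nat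
  have "(\<Sum>n. g n) = (\<Sum>n. \<integral>\<^sup>+t. ennreal (indicator {real n..<real n + 1} t) * g n \<partial>lborel)"
  proof -
    have "(\<integral>\<^sup>+t. ennreal (indicator {real n..<real n + 1} t) * g n \<partial>lborel) = g n" for n
      by (subst mult.commute, simp add: ennreal_indicator nn_integral_cmult_indicator)
    then show ?thesis by simp
  qed
  also have "\<dots> = (\<integral>\<^sup>+t. (\<Sum>n. ennreal (indicator {real n..<real n + 1} t) * g n) \<partial>lborel)"
    by (rule nn_integral_suminf[symmetric]) auto
  also have "\<dots> \<le> (\<integral>\<^sup>+t. ennreal (indicator {0..} t * exp (-(y * t\<^sup>2))) \<partial>lborel)"
  proof (rule nn_integral_mono)
    fix t :: real
    show "(\<Sum>n. ennreal (indicator {real n..<real n + 1} t) * g n) \<le> ennreal (indicator {0..} t * exp (-(y * t\<^sup>2)))"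
    proof (cases "0 \<le> t")
      case True
      have "t \<le> real (Suc (nat \<lfloor>t\<rfloor>))" using True by linarith
      then have "t\<^sup>2 \<le> (real (Suc (nat \<lfloor>t\<rfloor>)))\<^sup>2" using True by (intro power_mono) auto
      then have "exp (-(y * (real (Suc (nat \<lfloor>t\<rfloor>)))\<^sup>2)) \<le> exp (-(y * t\<^sup>2))"
        using y by (simp add: mult_left_mono)
      then show ?thesis using True by (simp add: step_suminf g_def)
    next
      case False
      then show ?thesis by (simp add: step_suminf)
    qed
  qed
  finally show ?thesis unfolding g_def .
qed

lemma Th_bounds:
  fixes y :: real assumes y: "y > 0"
  shows "Th y \<le> ennreal (sqrt (pi / y) + 1)" and "ennreal (sqrt (pi / y)) \<le> Th y + 1"
proof -
  define S0 where "S0 = (\<Sum>n. ennreal (exp (-(y * (real n)\<^sup>2))))"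
  define S1 where "S1 = (\<Sum>n. ennreal (exp (-(y * (real (Suc n))\<^sup>2))))"
  define I where "I = (\<integral>\<^sup>+t. ennreal (indicator {0..} t * exp (-(y * t\<^sup>2))) \<partial>lborel)"
  have T: "Th y = S0 + S1" unfolding S0_def S1_def by (rule Th_split)
  have S0: "S0 = 1 + S1" unfolding S0_def S1_def by (subst ennreal_suminf_Suc) simp
  have I: "I = ennreal (sqrt (pi / y) / 2)" unfolding I_def using y by (rule gauss_half)
  have u: "I \<le> S0" unfolding I_def S0_def using y by (rule Th_int_upper)
  have l: "S1 \<le> I" unfolding I_def S1_def using y by (rule Th_int_lower)
  have II: "I + I = ennreal (sqrt (pi / y))" unfolding I
    using y by (subst ennreal_plus[symmetric]) auto
  have "Th y \<le> (1 + I) + I" unfolding T S0 using l by (intro add_mono) auto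
  also have "\<dots> = ennreal (sqrt (pi / y)) + 1" using II
    by (simp add: ac_simps)
  also have "\<dots> = ennreal (sqrt (pi / y) + 1)"
    using y by (subst ennreal_plus) auto
  finally show "Th y \<le> ennreal (sqrt (pi / y) + 1)" .
  have "ennreal (sqrt (pi / y)) = I + I" using II by simp
  also have "\<dots> \<le> S0 + (1 + S1)" using u l S0 by (intro add_mono) auto
  also have "\<dots> = Th y + 1" unfolding T by (simp add: ac_simps)
  finally show "ennreal (sqrt (pi / y)) \<le> Th y + 1" .
qed



lemma Th_real:
  fixes y :: real assumes y: "y > 0"
  shows "Th y = ennreal (enn2real (Th y))" and "\<bar>enn2real (Th y) - sqrt (pi / y)\<bar> \<le> 1"
    and "enn2real (Th y) \<ge> 0"
proof -
  have fin: "Th y \<noteq> \<infinity>" using Th_bounds(1)[OF y] by (auto simp: top_unique)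
  then show eq: "Th y = ennreal (enn2real (Th y))" by (simp add: ennreal_enn2real_if)
  show "enn2real (Th y) \<ge> 0" by simp
  have "ennreal (enn2real (Th y)) \<le> ennreal (sqrt (pi / y) + 1)" using Th_bounds(1)[OF y] eq by simp
  then have 1: "enn2real (Th y) \<le> sqrt (pi / y) + 1" using y by (subst (asm) ennreal_le_iff) auto
  have e: "ennreal (enn2real (Th y)) + 1 = ennreal (enn2real (Th y) + 1)"
    by (subst ennreal_plus) auto
  have "ennreal (sqrt (pi / y)) \<le> ennreal (enn2real (Th y) + 1)"
    using Th_bounds(2)[OF y] eq e by metis
  then have 2: "sqrt (pi / y) \<le> enn2real (Th y) + 1" by (subst (asm) ennreal_le_iff) auto
  show "\<bar>enn2real (Th y) - sqrt (pi / y)\<bar> \<le> 1" using 1 2 by linarith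
qed

lemma Th_measurable[measurable]: "Th \<in> borel_measurable borel"
proof -
  have "(\<lambda>z::real\<times>int. ennreal (exp (-(fst z * (real_of_int (snd z))\<^sup>2)))) \<in> borel_measurable (borel \<Otimes>\<^sub>M count_space UNIV)"
    by (rule measurable_compose_countable[where f = "\<lambda>k z. ennreal (exp (-(fst z * (real_of_int k)\<^sup>2)))" and g = snd]) auto
  then have "case_prod (\<lambda>y k. ennreal (exp (-(y * (real_of_int k)\<^sup>2)))) \<in> borel_measurable (borel \<Otimes>\<^sub>M count_space UNIV)"
    by (simp add: case_prod_beta')
  then have "(\<lambda>y. \<integral>\<^sup>+k. ennreal (exp (-(y * (real_of_int k)\<^sup>2))) \<partial>count_space (UNIV::int set)) \<in> borel_measurable borel"
    by (rule sigma_finite_measure.borel_measurable_nn_integral[OF sigma_finite_measure_count_space])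
  then show ?thesis unfolding Th_def[abs_def] .
qed

lemma gamma_scale:
  fixes s c :: real assumes s: "s > 0" and c: "c > 0"
  shows "(\<integral>\<^sup>+x. ennreal (indicator {0..} x * x powr (s-1) * exp (-(c*x))) \<partial>lborel) = ennreal (Gamma s * c powr (-s))"
proof -
  define h where "h x = ennreal (indicator {0..} x * x powr (s-1) * exp (-(c*x)))" for x :: real
  have "ennreal (Gamma s) = (\<integral>\<^sup>+t. ennreal (indicator {0..} t * t powr (s - 1) / exp t) \<partial>lborel)"
    using Gamma_conv_nn_integral_real[OF s] by simp
  also have "\<dots> = ennreal \<bar>c\<bar> * (\<integral>\<^sup>+x. ennreal (indicator {0..} (0 + c * x) * (0 + c * x) powr (s - 1) / exp (0 + c * x)) \<partial>lborel)"
    by (rule nn_integral_real_affine) (use c in auto)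
  also have "(\<lambda>x. ennreal (indicator {0..} (0 + c * x) * (0 + c * x) powr (s - 1) / exp (0 + c * x))) =
      (\<lambda>x. ennreal (c powr (s-1)) * h x)"
  proof
    fix x :: real
    show "ennreal (indicator {0..} (0 + c * x) * (0 + c * x) powr (s - 1) / exp (0 + c * x)) = ennreal (c powr (s-1)) * h x"
      unfolding h_def using c
      by (cases "x \<ge> 0") (auto simp: indicator_def powr_mult zero_le_mult_iff exp_minus field_simps ennreal_mult[symmetric])
  qed
  also have "(\<integral>\<^sup>+x. ennreal (c powr (s-1)) * h x \<partial>lborel) = ennreal (c powr (s-1)) * (\<integral>\<^sup>+x. h x \<partial>lborel)"
    by (rule nn_integral_cmult) (auto simp: h_def)
  finally have "ennreal (Gamma s) = ennreal (c powr s) * (\<integral>\<^sup>+x. h x \<partial>lborel)"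
    using c by (simp add: mult.assoc[symmetric] ennreal_mult[symmetric] powr_mult_base)
  then have "ennreal (c powr (-s)) * ennreal (Gamma s) = ennreal (c powr (-s)) * ennreal (c powr s) * (\<integral>\<^sup>+x. h x \<partial>lborel)"
    by (simp add: mult.assoc)
  also have "ennreal (c powr (-s)) * ennreal (c powr s) = 1"
    using c by (simp add: ennreal_mult[symmetric] powr_add[symmetric])
  finally show ?thesis unfolding h_def using c Gamma_real_pos[OF s]
    by (simp add: ennreal_mult[symmetric] mult.commute mult.left_commute)
qed

lemma prod_count:
  fixes g :: "'n::finite \<Rightarrow> int \<Rightarrow> ennreal"
  shows "(\<integral>\<^sup>+k. (\<Prod>i\<in>UNIV. g i ((k::int^'n)$i)) \<partial>count_space UNIV) = (\<Prod>i\<in>UNIV. \<integral>\<^sup>+j. g i j \<partial>count_space UNIV)"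
proof -
  interpret product_sigma_finite "\<lambda>_::'n. count_space (UNIV::int set)"
    by (intro product_sigma_finite.intro sigma_finite_measure_count_space)
  have bij: "bij_betw vec_nth UNIV (UNIV :: ('n \<Rightarrow> int) set)"
    by (rule bij_betwI[where g = vec_lambda]) auto
  have "(\<integral>\<^sup>+k. (\<Prod>i\<in>UNIV. g i ((k::int^'n)$i)) \<partial>count_space UNIV) =
      (\<integral>\<^sup>+x. (\<Prod>i\<in>UNIV. g i (x i)) \<partial>count_space UNIV)"
    by (rule nn_integral_bij_count_space[OF bij, of "\<lambda>x. \<Prod>i\<in>UNIV. g i (x i)"])
  also have "count_space (UNIV :: ('n \<Rightarrow> int) set) = PiM UNIV (\<lambda>_. count_space UNIV)"
    by (subst count_space_PiM_finite) (auto simp: PiE_UNIV_domain)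
  also have "(\<integral>\<^sup>+x. (\<Prod>i\<in>UNIV. g i (x i)) \<partial>PiM UNIV (\<lambda>_. count_space UNIV)) = (\<Prod>i\<in>UNIV. \<integral>\<^sup>+j. g i j \<partial>count_space UNIV)"
    by (rule product_nn_integral_prod) auto
  finally show ?thesis .
qed



lemma quad_form_ge1: "quad_form a k \<ge> 1"
  unfolding quad_form_def by (auto intro!: sum_nonneg)

lemma quad_form_uminus: "quad_form a (-k) = quad_form a k"
  unfolding quad_form_def by simp

lemma main_identity:
  fixes a :: "real^'n" and s :: real
  assumes a: "\<forall>i. a$i > 0" and s: "s > 0"
  shows "ennreal (Gamma s) * (\<integral>\<^sup>+k. ennreal (quad_form a k powr (-s)) \<partial>count_space UNIV) =
    (\<integral>\<^sup>+x. ennreal (indicator {0..} x * x powr (s-1) / exp x) * (\<Prod>i\<in>UNIV. Th (x / (a$i)\<^sup>2)) \<partial>lborel)"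
proof -
  define C where "C x = indicator {0..} x * x powr (s-1) / exp x" for x :: real
  have C0: "C x \<ge> 0" for x by (simp add: C_def)
  have "ennreal (Gamma s) * (\<integral>\<^sup>+k. ennreal (quad_form a k powr (-s)) \<partial>count_space UNIV) =
      (\<integral>\<^sup>+k. ennreal (Gamma s) * ennreal (quad_form a k powr (-s)) \<partial>count_space UNIV)"
    by (rule nn_integral_cmult[symmetric]) auto
  also have "\<dots> = (\<integral>\<^sup>+k. \<integral>\<^sup>+x. ennreal (indicator {0..} x * x powr (s-1) * exp (-(quad_form a k * x))) \<partial>lborel \<partial>count_space UNIV)"
  proof (rule nn_integral_cong)
    fix k :: "int^'n"
    have q: "quad_form a k > 0" using quad_form_ge1[of a k] by linarith
    show "ennreal (Gamma s) * ennreal (quad_form a k powr (-s)) =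
       (\<integral>\<^sup>+x. ennreal (indicator {0..} x * x powr (s-1) * exp (-(quad_form a k * x))) \<partial>lborel)"
      using gamma_scale[OF s q] s by (simp add: ennreal_mult[symmetric] Gamma_real_pos)
  qed
  also have "\<dots> = (\<integral>\<^sup>+x. \<integral>\<^sup>+k. ennreal (indicator {0..} x * x powr (s-1) * exp (-(quad_form a k * x))) \<partial>count_space UNIV \<partial>lborel)"
    by (rule nn_integral_count_space_nn_integral[symmetric]) auto
  also have "\<dots> = (\<integral>\<^sup>+x. ennreal (C x) * (\<Prod>i\<in>UNIV. Th (x / (a$i)\<^sup>2)) \<partial>lborel)"
  proof (rule nn_integral_cong)
    fix x :: real
    have e: "indicator {0..} x * x powr (s-1) * exp (-(quad_form a k * x)) =
        C x * (\<Prod>i\<in>UNIV. exp (-(x / (a$i)\<^sup>2 * (real_of_int (k$i))\<^sup>2)))" for k :: "int^'n"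
    proof -
      have "quad_form a k * x = x + (\<Sum>i\<in>UNIV. x / (a$i)\<^sup>2 * (real_of_int (k$i))\<^sup>2)"
        unfolding quad_form_def by (simp add: algebra_simps sum_distrib_left)
      then have "exp (-(quad_form a k * x)) = exp (-x) * (\<Prod>i\<in>UNIV. exp (-(x / (a$i)\<^sup>2 * (real_of_int (k$i))\<^sup>2)))"
      proof -
        assume h: "quad_form a k * x = x + (\<Sum>i\<in>UNIV. x / (a$i)\<^sup>2 * (real_of_int (k$i))\<^sup>2)"
        have "exp (-(quad_form a k * x)) = exp (-x + (\<Sum>i\<in>UNIV. -(x / (a$i)\<^sup>2 * (real_of_int (k$i))\<^sup>2)))"
          unfolding h by (simp add: sum_negf)
        also have "\<dots> = exp (-x) * (\<Prod>i\<in>UNIV. exp (-(x / (a$i)\<^sup>2 * (real_of_int (k$i))\<^sup>2)))"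
          by (simp only: exp_add exp_sum[OF finite])
        finally show ?thesis .
      qed
      then show ?thesis unfolding C_def by (simp add: exp_minus field_simps)
    qed
    have "(\<integral>\<^sup>+k. ennreal (indicator {0..} x * x powr (s-1) * exp (-(quad_form a k * x))) \<partial>count_space UNIV) =
        (\<integral>\<^sup>+k. ennreal (C x) * (\<Prod>i\<in>UNIV. ennreal (exp (-(x / (a$i)\<^sup>2 * (real_of_int ((k::int^'n)$i))\<^sup>2)))) \<partial>count_space UNIV)"
      by (intro nn_integral_cong) (simp add: e C0 ennreal_mult prod_ennreal prod_nonneg)
    also have "\<dots> = ennreal (C x) * (\<integral>\<^sup>+k. (\<Prod>i\<in>UNIV. ennreal (exp (-(x / (a$i)\<^sup>2 * (real_of_int ((k::int^'n)$i))\<^sup>2)))) \<partial>count_space UNIV)"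
      by (rule nn_integral_cmult) auto
    also have "(\<integral>\<^sup>+k. (\<Prod>i\<in>UNIV. ennreal (exp (-(x / (a$i)\<^sup>2 * (real_of_int ((k::int^'n)$i))\<^sup>2)))) \<partial>count_space UNIV)
       = (\<Prod>i\<in>UNIV. Th (x / (a$i)\<^sup>2))"
      unfolding Th_def by (rule prod_count[of "\<lambda>i j. ennreal (exp (-(x / (a$i)\<^sup>2 * (real_of_int j)\<^sup>2)))"])
    finally show "(\<integral>\<^sup>+k. ennreal (indicator {0..} x * x powr (s-1) * exp (-(quad_form a k * x))) \<partial>count_space UNIV) =
        ennreal (C x) * (\<Prod>i\<in>UNIV. Th (x / (a$i)\<^sup>2))" .
  qed
  finally show ?thesis unfolding C_def .
qed



lemma prod_diff_bound:
  fixes A B :: "'i \<Rightarrow> real"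
  assumes "finite I" "K \<ge> 0" "\<delta> \<ge> 0"
    and "\<And>i. i \<in> I \<Longrightarrow> 0 \<le> A i \<and> A i \<le> K \<and> 0 \<le> B i \<and> B i \<le> K \<and> \<bar>A i - B i\<bar> \<le> \<delta>"
  shows "\<bar>prod A I - prod B I\<bar> \<le> real (card I) * K ^ (card I - 1) * \<delta>"
  using assms(1,4)
proof (induction I rule: finite_induct)
  case empty
  then show ?case by simp
next
  case (insert j F)
  let ?n = "card F"
  have IH: "\<bar>prod A F - prod B F\<bar> \<le> real ?n * K ^ (?n - 1) * \<delta>" using insert by auto
  have Aj: "0 \<le> A j" "A j \<le> K" "\<bar>A j - B j\<bar> \<le> \<delta>" using insert.prems by auto
  have PB: "\<bar>prod B F\<bar> \<le> K ^ ?n"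
  proof -
    have "\<bar>prod B F\<bar> = (\<Prod>i\<in>F. \<bar>B i\<bar>)" by (simp add: abs_prod)
    also have "\<dots> \<le> (\<Prod>i\<in>F. K)" by (rule prod_mono) (use insert.prems in auto)
    finally show ?thesis by simp
  qed
  have "prod A (insert j F) - prod B (insert j F) = A j * (prod A F - prod B F) + (A j - B j) * prod B F"
    using insert by (simp add: algebra_simps)
  also have "\<bar>\<dots>\<bar> \<le> \<bar>A j\<bar> * \<bar>prod A F - prod B F\<bar> + \<bar>A j - B j\<bar> * \<bar>prod B F\<bar>"
    by (metis abs_mult abs_triangle_ineq)
  also have "\<dots> \<le> K * (real ?n * K ^ (?n - 1) * \<delta>) + \<delta> * K ^ ?n"
    using Aj IH PB assms(2,3) by (intro add_mono mult_mono) auto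
  also have "K * (real ?n * K ^ (?n - 1) * \<delta>) = real ?n * K ^ ?n * \<delta>"
    by (cases ?n) (auto simp: algebra_simps)
  also have "real ?n * K ^ ?n * \<delta> + \<delta> * K ^ ?n = real (card (insert j F)) * K ^ (card (insert j F) - 1) * \<delta>"
    using insert by (simp add: algebra_simps)
  finally show ?case .
qed

lemma K_bound:
  fixes x :: real and n :: nat assumes x: "x > 0"
  shows "(1 + sqrt (pi / x)) ^ n \<le> 3 ^ n * (1 + x powr (- (real n / 2)))"
proof (cases "x \<ge> 1")
  case True
  have "sqrt (pi / x) \<le> sqrt pi" using True x by (auto intro!: divide_left_mono simp: field_simps)
  also have "sqrt pi \<le> 2" using pi_less_4 real_sqrt_le_mono[of pi 4] by simp
  finally have "(1 + sqrt (pi / x)) ^ n \<le> 3 ^ n" using x by (intro power_mono) auto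
  also have "\<dots> \<le> 3 ^ n * (1 + x powr (- (real n / 2)))" by simp
  finally show ?thesis .
next
  case False
  have sx: "sqrt x > 0" "sqrt x \<le> 1" using x False by auto
  have "sqrt (pi / x) = sqrt pi / sqrt x" by (simp add: real_sqrt_divide)
  also have "\<dots> \<le> 2 / sqrt x"
    using sx pi_less_4 real_sqrt_le_mono[of pi 4] by (intro divide_right_mono) auto
  finally have h2: "sqrt (pi / x) \<le> 2 / sqrt x" .
  have h1: "1 \<le> 1 / sqrt x" using sx by (simp add: field_simps)
  have h3: "2 / sqrt x = 2 * (1 / sqrt x)" by simp
  have "1 + sqrt (pi / x) \<le> 3 * (1 / sqrt x)" using h1 h2 h3 by linarith
  then have "(1 + sqrt (pi / x)) ^ n \<le> (3 * (1 / sqrt x)) ^ n" using x by (intro power_mono) auto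
  also have "(3 * (1 / sqrt x)) ^ n = 3 ^ n * x powr (- (real n / 2))"
  proof -
    have "(1 / sqrt x) = x powr (-(1/2))" using x by (simp add: powr_minus_divide powr_half_sqrt)
    then have "(1 / sqrt x) ^ n = (x powr (-(1/2))) powr (real n)" using x by (simp add: powr_realpow)
    also have "\<dots> = x powr (- (real n / 2))" by (simp add: powr_powr)
    finally show ?thesis by (simp only: power_mult_distrib)
  qed
  also have "\<dots> \<le> 3 ^ n * (1 + x powr (- (real n / 2)))" by simp
  finally show ?thesis .
qed

lemma gamma_nn:
  fixes s t :: real assumes "s - t > 0"
  shows "(\<integral>\<^sup>+x. ennreal (indicator {0..} x * x powr (s-1) / exp x * x powr (-t)) \<partial>lborel) = ennreal (Gamma (s - t))"
proof -
  have "(\<lambda>x. ennreal (indicator {0..} x * x powr (s-1) / exp x * x powr (-t))) =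
       (\<lambda>x. ennreal (indicator {0..} x * x powr ((s - t) - 1) / exp x))"
  proof
    fix x :: real
    show "ennreal (indicator {0..} x * x powr (s-1) / exp x * x powr (-t)) = ennreal (indicator {0..} x * x powr ((s - t) - 1) / exp x)"
    proof -
      have e: "s - 1 - t = s - t - 1" by simp
      show ?thesis by (cases "x > 0"; cases "x = 0") (auto simp: indicator_def powr_add[symmetric] e)
    qed
  qed
  then show ?thesis using Gamma_conv_nn_integral_real[OF assms] by simp
qed



lemma ennreal_le_plus_mult:
  fixes a b c M :: real
  assumes "a \<le> b + 1/M * c" "0 \<le> b" "0 \<le> c" "M > 0"
  shows "ennreal a \<le> ennreal b + ennreal (1/M) * ennreal c"
proof -
  have "ennreal (1/M) * ennreal c = ennreal (1/M * c)"
    using assms by (subst ennreal_mult) auto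
  then have "ennreal b + ennreal (1/M) * ennreal c = ennreal (b + 1/M * c)"
    using assms by (subst ennreal_plus) auto
  then show ?thesis using assms(1) by (simp add: ennreal_leI)
qed

lemma asym:
  fixes a :: "real^'n" and s M :: real
  assumes s: "s > real CARD('n) / 2" and M: "M \<ge> 1" and a: "\<forall>i. a$i \<ge> M"
  shows "\<exists>fr. (\<integral>\<^sup>+k. ennreal (quad_form a k powr (-s)) \<partial>count_space UNIV) = ennreal fr \<and> fr \<ge> 0 \<and>
    \<bar>fr / (\<Prod>i\<in>UNIV. a$i) - pi powr (real CARD('n) / 2) * Gamma (s - real CARD('n) / 2) / Gamma s\<bar>
      \<le> real CARD('n) * 3 ^ (CARD('n) - 1) * (Gamma s + Gamma (s - real (CARD('n) - 1) / 2)) / (M * Gamma s)"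
proof -
  define d where "d = CARD('n)"
  have d1: "d \<ge> 1" unfolding d_def by (simp add: Suc_le_eq)
  have s0: "s > 0" using s of_nat_0_le_iff[of "CARD('n)"] by linarith
  have apos: "a$i > 0" for i using a[rule_format, of i] M by linarith
  have anz: "a$i \<noteq> 0" for i using apos[of i] by simp
  define g where "g x = indicator {0..} x * x powr (s-1) / exp x" for x :: real
  define A where "A i x = enn2real (Th (x / (a$i)\<^sup>2)) / a$i" for i x
  define B where "B x = sqrt (pi / x)" for x :: real
  define E where "E x = real d * 3^(d-1) * (1 + x powr (-(real (d-1)/2)))" for x :: real
  define P where "P = (\<Prod>i\<in>UNIV. a$i)"
  define K0 where "K0 = real d * 3^(d-1) * (Gamma s + Gamma (s - real (d-1)/2))"
  define Lr where "Lr = pi powr (real d/2) * Gamma (s - real d/2)"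
  have P0: "P > 0" unfolding P_def using apos by (simp add: prod_pos)
  have g0: "g x \<ge> 0" for x unfolding g_def by simp
  have gnp: "g x = 0" if "x \<le> 0" for x
    using that unfolding g_def by (cases "x = 0") (auto simp: indicator_def)
  have A0: "A i x \<ge> 0" for i x unfolding A_def using apos[of i] by simp
  have E0: "E x \<ge> 0" for x unfolding E_def by simp
  have gB0: "g x * B x ^ d \<ge> 0" for x
  proof (cases "x > 0")
    case True
    then show ?thesis using g0[of x] unfolding B_def by simp
  qed (simp add: gnp)
  have gm[measurable]: "g \<in> borel_measurable borel" unfolding g_def[abs_def] by measurable
  have Am[measurable]: "(\<lambda>x. \<Prod>i\<in>UNIV. A i x) \<in> borel_measurable borel" unfolding A_def by measurable
  have Bm[measurable]: "(\<lambda>x. B x ^ d) \<in> borel_measurable borel" unfolding B_def by measurable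
  have Em[measurable]: "E \<in> borel_measurable borel" unfolding E_def[abs_def] by measurable
  have Th_eq: "(\<Prod>i\<in>UNIV. Th (x / (a$i)\<^sup>2)) = ennreal P * ennreal (\<Prod>i\<in>UNIV. A i x)" if x: "x > 0" for x
  proof -
    have y: "x / (a$i)\<^sup>2 > 0" for i using x apos[of i] by simp
    have "(\<Prod>i\<in>UNIV. Th (x / (a$i)\<^sup>2)) = (\<Prod>i\<in>UNIV. ennreal (enn2real (Th (x / (a$i)\<^sup>2))))"
      using Th_real(1)[OF y] by (intro prod.cong) auto
    also have "\<dots> = ennreal (\<Prod>i\<in>UNIV. enn2real (Th (x / (a$i)\<^sup>2)))" by (rule prod_ennreal) simp
    also have "(\<Prod>i\<in>UNIV. enn2real (Th (x / (a$i)\<^sup>2))) = (\<Prod>i\<in>UNIV. a$i * A i x)"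
      unfolding A_def by (intro prod.cong) (auto simp: anz)
    also have "\<dots> = P * (\<Prod>i\<in>UNIV. A i x)" unfolding P_def by (simp add: prod.distrib)
    finally show ?thesis using P0 A0 by (simp add: ennreal_mult prod_nonneg)
  qed
  have diff: "\<bar>(\<Prod>i\<in>UNIV. A i x) - B x ^ d\<bar> \<le> E x / M" if x: "x > 0" for x
  proof -
    have Ai: "0 \<le> A i x \<and> A i x \<le> 1 + B x \<and> 0 \<le> B x \<and> B x \<le> 1 + B x \<and> \<bar>A i x - B x\<bar> \<le> 1 / M" for i
    proof -
      have y: "x / (a$i)\<^sup>2 > 0" using x apos[of i] by simp
      have "pi / (x / (a$i)\<^sup>2) = (a$i)\<^sup>2 * (pi / x)" using anz[of i] x by (simp add: field_simps)
      then have "sqrt (pi / (x / (a$i)\<^sup>2)) = sqrt ((a$i)\<^sup>2) * sqrt (pi / x)" by (simp only: real_sqrt_mult)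
      also have "sqrt ((a$i)\<^sup>2) = a$i" using apos[of i] by simp
      finally have "sqrt (pi / (x / (a$i)\<^sup>2)) = a$i * B x" unfolding B_def .
      then have "\<bar>enn2real (Th (x / (a$i)\<^sup>2)) - a$i * B x\<bar> \<le> 1" using Th_real(2)[OF y] by simp
      then have "\<bar>A i x - B x\<bar> \<le> 1 / a$i"
      proof -
        have "A i x - B x = (enn2real (Th (x / (a$i)\<^sup>2)) - a$i * B x) / a$i"
          unfolding A_def using anz[of i] by (simp add: field_simps)
        then have "\<bar>A i x - B x\<bar> = \<bar>enn2real (Th (x / (a$i)\<^sup>2)) - a$i * B x\<bar> / a$i"
          using apos[of i] by simp
        also have "\<dots> \<le> 1 / a$i" using apos[of i] \<open>\<bar>enn2real (Th (x / (a$i)\<^sup>2)) - a$i * B x\<bar> \<le> 1\<close>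
          by (intro divide_right_mono) auto
        finally show ?thesis .
      qed
      also have "1 / a$i \<le> 1 / M" using a M apos[of i] by (intro divide_left_mono) auto
      finally have "\<bar>A i x - B x\<bar> \<le> 1 / M" .
      moreover have "1 / M \<le> 1" using M by simp
      moreover have "B x \<ge> 0" unfolding B_def using x by simp
      ultimately show ?thesis using A0[of i x] by linarith
    qed
    have "\<bar>(\<Prod>i\<in>UNIV. A i x) - (\<Prod>i\<in>(UNIV::'n set). B x)\<bar> \<le> real (card (UNIV::'n set)) * (1 + B x) ^ (card (UNIV::'n set) - 1) * (1 / M)"
      by (rule prod_diff_bound) (use Ai M x in \<open>auto simp: B_def\<close>)
    also have "\<dots> = real d * (1 + B x) ^ (d - 1) / M" unfolding d_def by simp
    also have "\<dots> \<le> E x / M"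
    proof -
      have "(1 + B x) ^ (d - 1) \<le> 3 ^ (d - 1) * (1 + x powr (- (real (d - 1) / 2)))"
        unfolding B_def using K_bound[OF x] .
      then have "real d * (1 + B x) ^ (d - 1) \<le> real d * (3 ^ (d - 1) * (1 + x powr (- (real (d - 1) / 2))))"
        by (rule mult_left_mono) simp
      then show ?thesis unfolding E_def using M by (intro divide_right_mono) (auto simp: mult.assoc)
    qed
    finally show ?thesis unfolding d_def by simp
  qed
  define JA where "JA = (\<integral>\<^sup>+x. ennreal (g x * (\<Prod>i\<in>UNIV. A i x)) \<partial>lborel)"
  define JB where "JB = (\<integral>\<^sup>+x. ennreal (g x * B x ^ d) \<partial>lborel)"
  define JE where "JE = (\<integral>\<^sup>+x. ennreal (g x * E x) \<partial>lborel)"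
  have JB: "JB = ennreal Lr"
  proof -
    have "JB = (\<integral>\<^sup>+x. ennreal (pi powr (real d / 2)) * ennreal (g x * x powr (- (real d / 2))) \<partial>lborel)"
      unfolding JB_def
    proof (intro nn_integral_cong)
      fix x :: real
      show "ennreal (g x * B x ^ d) = ennreal (pi powr (real d / 2)) * ennreal (g x * x powr (- (real d / 2)))"
      proof (cases "x > 0")
        case True
        have px: "pi / x > 0" using True by simp
        have Bx: "B x = (pi / x) powr (1/2)" unfolding B_def using px by (simp add: powr_half_sqrt)
        have pos: "(pi / x) powr (1/2) > 0" using px True by simp
        from Bx have "B x ^ d = ((pi / x) powr (1/2)) powr (real d)"
          by (simp only: powr_realpow[OF pos])
        also have "\<dots> = (pi / x) powr (real d / 2)" by (simp add: powr_powr)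
        finally have "B x ^ d = (pi / x) powr (real d / 2)" .
        also have "\<dots> = pi powr (real d / 2) * x powr (- (real d / 2))"
          using True by (simp add: powr_divide powr_minus_divide)
        finally show ?thesis using g0[of x] by (simp add: ennreal_mult[symmetric] mult_ac)
      next
        case False
        then show ?thesis using gnp[of x] by simp
      qed
    qed
    also have "\<dots> = ennreal (pi powr (real d / 2)) * (\<integral>\<^sup>+x. ennreal (g x * x powr (- (real d / 2))) \<partial>lborel)"
      by (rule nn_integral_cmult) measurable
    also have "(\<integral>\<^sup>+x. ennreal (g x * x powr (- (real d / 2))) \<partial>lborel) = ennreal (Gamma (s - real d / 2))"
      unfolding g_def by (rule gamma_nn) (use s in \<open>simp add: d_def\<close>)
    moreover have "Gamma (s - real d / 2) > 0" by (rule Gamma_real_pos) (use s in \<open>simp add: d_def\<close>)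
    ultimately show ?thesis unfolding Lr_def by (simp add: ennreal_mult)
  qed
  have JE: "JE = ennreal K0"
  proof -
    define c where "c = real d * 3^(d-1)"
    have c0: "c \<ge> 0" unfolding c_def by simp
    have "JE = (\<integral>\<^sup>+x. ennreal c * (ennreal (g x) + ennreal (g x * x powr (-(real (d-1)/2)))) \<partial>lborel)"
      unfolding JE_def
      by (intro nn_integral_cong) (simp add: E_def c_def g0 ennreal_mult[symmetric] ennreal_plus[symmetric] algebra_simps del: ennreal_plus)
    also have "\<dots> = ennreal c * ((\<integral>\<^sup>+x. ennreal (g x) \<partial>lborel) + (\<integral>\<^sup>+x. ennreal (g x * x powr (-(real (d-1)/2))) \<partial>lborel))"
      by (subst nn_integral_cmult, measurable, subst nn_integral_add) auto
    also have "(\<integral>\<^sup>+x. ennreal (g x) \<partial>lborel) = ennreal (Gamma s)"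
      unfolding g_def using Gamma_conv_nn_integral_real[OF s0] by simp
    also have "(\<integral>\<^sup>+x. ennreal (g x * x powr (-(real (d-1)/2))) \<partial>lborel) = ennreal (Gamma (s - real (d-1)/2))"
      unfolding g_def by (rule gamma_nn) (use s d1 in \<open>simp add: d_def of_nat_diff\<close>)
    finally have JE1: "JE = ennreal c * (ennreal (Gamma s) + ennreal (Gamma (s - real (d-1)/2)))" .
    have G1: "Gamma (s - real (d-1)/2) > 0" by (rule Gamma_real_pos) (use s d1 in \<open>simp add: d_def of_nat_diff\<close>)
    have G2: "Gamma s > 0" using Gamma_real_pos[OF s0] .
    have "ennreal c * (ennreal (Gamma s) + ennreal (Gamma (s - real (d-1)/2))) = ennreal (c * (Gamma s + Gamma (s - real (d-1)/2)))"
      using G1 G2 c0 by (simp add: ennreal_mult ennreal_plus)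
    then show ?thesis unfolding K0_def JE1 c_def .
  qed
  have up: "JA \<le> JB + ennreal (1/M) * JE"
  proof -
    have "JA \<le> (\<integral>\<^sup>+x. ennreal (g x * B x ^ d) + ennreal (1/M) * ennreal (g x * E x) \<partial>lborel)"
      unfolding JA_def
    proof (intro nn_integral_mono)
      fix x :: real
      have "g x * (\<Prod>i\<in>UNIV. A i x) \<le> g x * B x ^ d + 1/M * (g x * E x)"
      proof (cases "x > 0")
        case True
        have "(\<Prod>i\<in>UNIV. A i x) \<le> B x ^ d + E x / M" using diff[OF True] by linarith
        then have "g x * (\<Prod>i\<in>UNIV. A i x) \<le> g x * (B x ^ d + E x / M)" by (rule mult_left_mono[OF _ g0])
        then show ?thesis by (simp add: algebra_simps)
      qed (simp add: gnp)
      then show "ennreal (g x * (\<Prod>i\<in>UNIV. A i x)) \<le> ennreal (g x * B x ^ d) + ennreal (1/M) * ennreal (g x * E x)"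
        using M gB0[of x] g0[of x] E0[of x] by (intro ennreal_le_plus_mult) auto
    qed
    also have "\<dots> = JB + ennreal (1/M) * JE" unfolding JB_def JE_def
      by (subst nn_integral_add, measurable, subst nn_integral_cmult) auto
    finally show ?thesis .
  qed
  have lo: "JB \<le> JA + ennreal (1/M) * JE"
  proof -
    have "JB \<le> (\<integral>\<^sup>+x. ennreal (g x * (\<Prod>i\<in>UNIV. A i x)) + ennreal (1/M) * ennreal (g x * E x) \<partial>lborel)"
      unfolding JB_def
    proof (intro nn_integral_mono)
      fix x :: real
      have "g x * B x ^ d \<le> g x * (\<Prod>i\<in>UNIV. A i x) + 1/M * (g x * E x)"
      proof (cases "x > 0")
        case True
        have "B x ^ d \<le> (\<Prod>i\<in>UNIV. A i x) + E x / M" using diff[OF True] by linarith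
        then have "g x * B x ^ d \<le> g x * ((\<Prod>i\<in>UNIV. A i x) + E x / M)" by (rule mult_left_mono[OF _ g0])
        then show ?thesis by (simp add: algebra_simps)
      qed (simp add: gnp)
      then show "ennreal (g x * B x ^ d) \<le> ennreal (g x * (\<Prod>i\<in>UNIV. A i x)) + ennreal (1/M) * ennreal (g x * E x)"
        using M g0[of x] E0[of x] A0 by (intro ennreal_le_plus_mult) (auto intro!: mult_nonneg_nonneg prod_nonneg)
    qed
    also have "\<dots> = JA + ennreal (1/M) * JE" unfolding JA_def JE_def
      by (subst nn_integral_add, measurable, subst nn_integral_cmult) auto
    finally show ?thesis .
  qed
  define F where "F = (\<integral>\<^sup>+k. ennreal (quad_form a k powr (-s)) \<partial>count_space UNIV)"
  have "ennreal (Gamma s) * F = (\<integral>\<^sup>+x. ennreal (g x) * (\<Prod>i\<in>UNIV. Th (x / (a$i)\<^sup>2)) \<partial>lborel)"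
    unfolding F_def g_def using main_identity[of a s] apos s0 by simp
  also have "\<dots> = (\<integral>\<^sup>+x. ennreal P * ennreal (g x * (\<Prod>i\<in>UNIV. A i x)) \<partial>lborel)"
  proof (intro nn_integral_cong)
    fix x :: real
    show "ennreal (g x) * (\<Prod>i\<in>UNIV. Th (x / (a$i)\<^sup>2)) = ennreal P * ennreal (g x * (\<Prod>i\<in>UNIV. A i x))"
    proof (cases "x > 0")
      case True
      then show ?thesis using Th_eq[OF True] g0[of x] A0 by (simp add: ennreal_mult prod_nonneg mult_ac)
    qed (simp add: gnp)
  qed
  also have "\<dots> = ennreal P * JA" unfolding JA_def by (rule nn_integral_cmult) measurable
  finally have FJ: "ennreal (Gamma s) * F = ennreal P * JA" .
  have Lr0: "Lr \<ge> 0" unfolding Lr_def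
    using Gamma_real_pos[of "s - real d / 2"] s by (simp add: d_def)
  have K00: "K0 \<ge> 0" unfolding K0_def using Gamma_real_pos[OF s0] Gamma_real_pos[of "s - real (d-1)/2"] s d1
    by (simp add: d_def of_nat_diff)
  have "JA \<le> ennreal Lr + ennreal (1/M) * ennreal K0" using up JB JE by simp
  also have "\<dots> = ennreal (Lr + K0 / M)" using Lr0 K00 M by (simp add: ennreal_mult[symmetric] ennreal_plus[symmetric] del: ennreal_plus)
  finally have JAle: "JA \<le> ennreal (Lr + K0 / M)" .
  then have "JA \<noteq> \<infinity>" by (auto simp: top_unique)
  then obtain ja where ja: "JA = ennreal ja" "ja \<ge> 0" by (cases JA rule: ennreal_cases) auto
  have "ennreal ja \<le> ennreal (Lr + K0 / M)" using JAle unfolding ja(1) .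
  then have ja1: "ja \<le> Lr + K0 / M" using Lr0 K00 M by (subst (asm) ennreal_le_iff) auto
  have "ennreal Lr \<le> ennreal ja + ennreal (1/M) * ennreal K0" using lo JB JE ja by simp
  also have "\<dots> = ennreal (ja + K0 / M)" using ja K00 M by (simp add: ennreal_mult[symmetric] ennreal_plus[symmetric] del: ennreal_plus)
  finally have "ennreal Lr \<le> ennreal (ja + K0 / M)" .
  then have ja2: "Lr \<le> ja + K0 / M" using ja K00 M by (subst (asm) ennreal_le_iff) auto
  define fr where "fr = P * ja / Gamma s"
  have G0: "Gamma s > 0" using Gamma_real_pos[OF s0] .
  have "F = ennreal (1 / Gamma s) * (ennreal (Gamma s) * F)"
    using G0 by (simp add: mult.assoc[symmetric] ennreal_mult[symmetric])
  also have "\<dots> = ennreal fr" unfolding FJ ja fr_def using G0 P0 ja by (simp add: ennreal_mult[symmetric])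
  finally have Ffr: "F = ennreal fr" .
  have fr0: "fr \<ge> 0" unfolding fr_def using P0 ja G0 by simp
  have "fr / P - Lr / Gamma s = (ja - Lr) / Gamma s" unfolding fr_def using P0 G0 by (simp add: field_simps)
  then have "\<bar>fr / P - Lr / Gamma s\<bar> = \<bar>ja - Lr\<bar> / Gamma s" using G0 by simp
  also have "\<dots> \<le> (K0 / M) / Gamma s" using ja1 ja2 G0 by (intro divide_right_mono) auto
  finally have "\<bar>fr / P - Lr / Gamma s\<bar> \<le> K0 / (M * Gamma s)" by simp
  then show ?thesis using Ffr fr0 unfolding F_def P_def Lr_def K0_def d_def by (intro exI[of _ fr]) (simp add: mult_ac)
qed



lemma bridge:
  fixes g :: "'a \<Rightarrow> real"
  assumes nn: "\<And>x. g x \<ge> 0" and fin: "(\<integral>\<^sup>+x. ennreal (g x) \<partial>count_space UNIV) \<noteq> \<infinity>"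
  shows "g summable_on UNIV" and "infsum g UNIV = enn2real (\<integral>\<^sup>+x. ennreal (g x) \<partial>count_space UNIV)"
proof -
  have int: "integrable (count_space UNIV) g"
    using nn fin by (intro integrableI_nonneg) (auto simp: top.not_eq_extremum)
  then have abs: "Infinite_Set_Sum.abs_summable_on g UNIV" by (simp add: abs_summable_on_def)
  then have "Infinite_Sum.abs_summable_on g UNIV" using abs_summable_equivalent by blast
  then show sm: "g summable_on UNIV" using nn by simp
  have "infsum g UNIV = infsetsum g UNIV" using infsetsum_infsum[OF abs] by simp
  also have "\<dots> = enn2real (\<integral>\<^sup>+x. ennreal (g x) \<partial>count_space UNIV)"
    using fin nn by (rule infsetsum_conv_nn_integral)
  finally show "infsum g UNIV = enn2real (\<integral>\<^sup>+x. ennreal (g x) \<partial>count_space UNIV)" .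
qed

lemma fin_nn:
  fixes a :: "real^'n" and t :: real
  assumes a: "\<forall>i. a$i > 0" and t: "t > real CARD('n) / 2"
  shows "(\<integral>\<^sup>+k. ennreal (quad_form a k powr (-t)) \<partial>count_space UNIV) \<noteq> \<infinity>"
proof -
  define a' where "a' = (\<chi> i. max 1 (a$i))"
  have a': "\<forall>i. a'$i \<ge> 1" unfolding a'_def by simp
  obtain fr where fr: "(\<integral>\<^sup>+k. ennreal (quad_form a' k powr (-t)) \<partial>count_space UNIV) = ennreal fr"
    using asym[OF t order.refl a'] by blast
  have "(\<integral>\<^sup>+k. ennreal (quad_form a k powr (-t)) \<partial>count_space UNIV) \<le>
        (\<integral>\<^sup>+k. ennreal (quad_form a' k powr (-t)) \<partial>count_space UNIV)"
  proof (intro nn_integral_mono ennreal_leI)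
    fix k :: "int^'n"
    have "quad_form a' k \<le> quad_form a k"
      unfolding quad_form_def
    proof (intro add_left_mono sum_mono)
      fix i
      have "(a$i)\<^sup>2 \<le> (a'$i)\<^sup>2" unfolding a'_def using a[rule_format, of i] by (intro power_mono) auto
      then show "(real_of_int (k$i))\<^sup>2 / (a'$i)\<^sup>2 \<le> (real_of_int (k$i))\<^sup>2 / (a$i)\<^sup>2"
        using a[rule_format, of i] a'[rule_format, of i] by (intro divide_left_mono) auto
    qed
    moreover have "quad_form a' k > 0" using quad_form_ge1[of a' k] by linarith
    moreover have "t > 0" using t by (smt (verit) of_nat_0_le_iff divide_nonneg_pos)
    ultimately show "quad_form a k powr (-t) \<le> quad_form a' k powr (-t)"
      by (intro powr_mono2') auto
  qed
  then show ?thesis using fr by (auto simp: top_unique)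
qed

lemma fin_sum:
  fixes a :: "real^'n" and t :: real
  assumes a: "\<forall>i. a$i > 0" and t: "t > real CARD('n) / 2"
  shows "(\<lambda>k. quad_form a k powr (-t)) summable_on UNIV"
  by (rule bridge(1)[OF _ fin_nn[OF a t]]) simp

lemma tangent:
  fixes x c q :: real
  assumes x: "x \<ge> 0" and c: "c > 0" and q: "0 < q" "q < 1"
  shows "x powr q \<le> (1 - q) * c powr q + q * c powr (q - 1) * x"
proof (cases "x = 0")
  case True
  then show ?thesis using q c by simp
next
  case False
  then have xp: "x > 0" using x by simp
  have "(x / c) powr q * 1 powr (1 - q) \<le> q * (x / c) + (1 - q) * 1"
    using q xp c by (intro Youngs_inequality_0) auto
  then have "x powr q / c powr q \<le> q * (x / c) + (1 - q)" using xp c by (simp add: powr_divide)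
  then have "x powr q \<le> (q * (x / c) + (1 - q)) * c powr q" using c by (simp add: divide_le_eq)
  also have "\<dots> = (1 - q) * c powr q + q * (c powr q / c) * x" by (simp add: algebra_simps)
  also have "c powr q / c = c powr (q - 1)" using c by (simp add: powr_diff)
  finally show ?thesis .
qed

lemma has_sum_finsum:
  fixes f :: "'i \<Rightarrow> 'a \<Rightarrow> real"
  assumes "finite I" "\<And>i. i \<in> I \<Longrightarrow> (f i has_sum S i) A"
  shows "((\<lambda>x. \<Sum>i\<in>I. f i x) has_sum (\<Sum>i\<in>I. S i)) A"
  using assms
proof (induction I rule: finite_induct)
  case empty
  then show ?case by simp
next
  case (insert j F)
  then show ?case by (simp, intro has_sum_add) auto
qed



lemma sq_le_quad:
  fixes a :: "real^'n" assumes a: "\<forall>i. a$i > 0"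
  shows "(real_of_int (k$i))\<^sup>2 \<le> (a$i)\<^sup>2 * quad_form a k"
proof -
  have ai: "a$i > 0" using a by simp
  have "(real_of_int (k$i))\<^sup>2 / (a$i)\<^sup>2 \<le> (\<Sum>j\<in>UNIV. (real_of_int (k$j))\<^sup>2 / (a$j)\<^sup>2)"
    by (rule member_le_sum) auto
  also have "\<dots> \<le> quad_form a k" unfolding quad_form_def by simp
  finally show ?thesis using ai by (simp add: divide_le_eq mult.commute)
qed

lemma moment_summable:
  fixes a :: "real^'n" and s :: real
  assumes a: "\<forall>i. a$i > 0" and s: "s - 1 > real CARD('n) / 2"
  shows "(\<lambda>k. (real_of_int (k$i))\<^sup>2 * quad_form a k powr (-s)) summable_on UNIV"
    and "(\<lambda>k. real_of_int (k$i) * quad_form a k powr (-s)) summable_on UNIV"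
proof -
  have S: "(\<lambda>k. (a$i)\<^sup>2 * quad_form a k powr (-(s-1))) summable_on UNIV"
    by (intro summable_on_cmult_right fin_sum[OF a s])
  have b: "(real_of_int (k$i))\<^sup>2 * quad_form a k powr (-s) \<le> (a$i)\<^sup>2 * quad_form a k powr (-(s-1))" for k
  proof -
    have Q: "quad_form a k > 0" using quad_form_ge1[of a k] by linarith
    have "(real_of_int (k$i))\<^sup>2 * quad_form a k powr (-s) \<le> ((a$i)\<^sup>2 * quad_form a k) * quad_form a k powr (-s)"
      by (intro mult_right_mono sq_le_quad[OF a]) simp
    also have "\<dots> = (a$i)\<^sup>2 * (quad_form a k powr 1 * quad_form a k powr (-s))" using Q by simp
    also have "quad_form a k powr 1 * quad_form a k powr (-s) = quad_form a k powr (-(s-1))"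
      by (simp only: powr_add[symmetric]) simp
    finally show ?thesis .
  qed
  show S2: "(\<lambda>k. (real_of_int (k$i))\<^sup>2 * quad_form a k powr (-s)) summable_on UNIV"
    by (rule summable_on_comparison_test[OF S b]) simp
  have "(\<lambda>k. norm (real_of_int (k$i) * quad_form a k powr (-s))) summable_on UNIV"
  proof (rule summable_on_comparison_test[OF S2])
    fix k :: "int^'n"
    have "\<bar>real_of_int (k$i)\<bar> \<le> (real_of_int (k$i))\<^sup>2"
    proof -
      have "\<bar>k$i\<bar> \<le> \<bar>k$i\<bar> * \<bar>k$i\<bar>"
      proof (cases "k$i = 0")
        case False
        then have "1 \<le> \<bar>k$i\<bar>" by linarith
        then show ?thesis using mult_left_mono[of 1 "\<bar>k$i\<bar>" "\<bar>k$i\<bar>"] by simp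
      qed simp
      then have "\<bar>k$i\<bar> \<le> (k$i)\<^sup>2" by (simp add: power2_eq_square abs_mult_self_eq)
      then show ?thesis by (metis of_int_abs of_int_le_iff of_int_power)
    qed
    then show "norm (real_of_int (k$i) * quad_form a k powr (-s)) \<le> (real_of_int (k$i))\<^sup>2 * quad_form a k powr (-s)"
      by (simp add: abs_mult mult_right_mono)
  qed simp
  then show "(\<lambda>k. real_of_int (k$i) * quad_form a k powr (-s)) summable_on UNIV"
    by (rule abs_summable_summable)
qed



lemma part_a:
  fixes q m s :: real and a :: "real^'n"
  assumes q: "0 < q" "q < 1" and sdef: "s = (m + real CARD('n)) / 2"
    and s1: "s * (1 - q) = 1" and s2: "s - 1 > real CARD('n) / 2" and a: "\<forall>i. a$i > 0"
  shows "let p = p_md m a; u2 = (\<chi> i. \<Sum>\<^sub>\<infinity>k. (real_of_int (k$i))^2 * p k)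
         in feasible u2 p \<and> (\<lambda>k. p k powr q) summable_on UNIV \<and>
            (\<forall>p'. feasible u2 p' \<longrightarrow> (\<lambda>k. p' k powr q) summable_on UNIV \<and> tsallis q p' \<le> tsallis q p)"
proof -
  define w where "w k = quad_form a k powr (-s)" for k :: "int^'n"
  define W where "W = infsum w UNIV"
  define p where "p = p_md m a"
  define u2 where "u2 = (\<chi> i. \<Sum>\<^sub>\<infinity>k. (real_of_int (k$i))^2 * p k)"
  have es: "-(m + real CARD('n)) / 2 = -s" using sdef by simp
  have s0: "s > real CARD('n)/2" using s2 by linarith
  have Qpos: "quad_form a k > 0" for k using quad_form_ge1[of a k] by linarith
  have w0: "w k > 0" for k unfolding w_def using Qpos[of k] by simp
  have wsum: "w summable_on UNIV" unfolding w_def by (rule fin_sum[OF a s0])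
  have Wpos: "W > 0"
  proof -
    have "sum w {0} \<le> W" unfolding W_def using wsum w0 by (intro finite_sum_le_infsum) (auto intro: less_imp_le)
    then show ?thesis using w0[of 0] by simp
  qed
  have fW: "f_md m a = W" unfolding f_md_def W_def w_def es ..
  have pw: "p k = w k / W" for k unfolding p_def p_md_def fW unfolding w_def es ..
  have p0: "p k \<ge> 0" for k using w0[of k] Wpos by (simp add: pw)
  have ppos: "p k > 0" for k using w0[of k] Wpos by (simp add: pw)
  have pfun: "p = (\<lambda>k. w k * (1 / W))" by (simp add: fun_eq_iff pw)
  have m2s: "(\<lambda>k. (real_of_int (k$i))\<^sup>2 * p k) summable_on UNIV" for i
  proof -
    have "(\<lambda>k. ((real_of_int (k$i))\<^sup>2 * w k) * (1/W)) summable_on UNIV"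
      by (rule summable_on_cmult_left) (use moment_summable(1)[OF a s2, of i] in \<open>simp add: w_def\<close>)
    then show ?thesis by (simp add: pw)
  qed
  have m1s: "(\<lambda>k. real_of_int (k$i) * p k) summable_on UNIV" for i
  proof -
    have "(\<lambda>k. (real_of_int (k$i) * w k) * (1/W)) summable_on UNIV"
      by (rule summable_on_cmult_left) (use moment_summable(2)[OF a s2, of i] in \<open>simp add: w_def\<close>)
    then show ?thesis by (simp add: pw)
  qed
  have H1: "(p has_sum 1) UNIV"
  proof -
    have "((\<lambda>k. w k * (1/W)) has_sum (W * (1/W))) UNIV"
      by (rule has_sum_cmult_left) (use wsum in \<open>simp add: W_def\<close>)
    then show ?thesis using Wpos by (simp add: pfun)
  qed
  have H2: "((\<lambda>k. real_of_int (k$i) * p k) has_sum 0) UNIV" for i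
  proof -
    define h where "h k = real_of_int (k$i) * p k" for k
    define S where "S = infsum h UNIV"
    have "h summable_on UNIV" using m1s[of i] unfolding h_def[abs_def] .
    then have hs: "(h has_sum S) UNIV" unfolding S_def by (rule has_sum_infsum)
    have hneg: "h (-k) = - h k" for k unfolding h_def by (simp add: pw w_def quad_form_uminus)
    have "((\<lambda>k. h (-k)) has_sum S) UNIV \<longleftrightarrow> (h has_sum S) UNIV"
      by (rule has_sum_reindex_bij_witness[where i = uminus and j = uminus]) auto
    with hs have "((\<lambda>k. - h k) has_sum S) UNIV" by (simp add: hneg)
    then have "(h has_sum (- S)) UNIV" by (simp add: has_sum_uminus)
    with hs have "S = - S" by (rule has_sum_unique)
    then have "S = 0" by simp
    then show ?thesis using hs unfolding h_def by simp
  qed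
  have H3: "((\<lambda>k. (real_of_int (k$i))\<^sup>2 * p k) has_sum u2$i) UNIV" for i
    using m2s[of i] by (simp add: u2_def)
  have feas: "feasible u2 p" unfolding feasible_def using p0 H1 H2 H3 by blast
  have sq: "s * q = s - 1" using s1 by (simp add: algebra_simps)
  have pq: "p k powr q = quad_form a k powr (-(s*q)) * (1 / W powr q)" for k
  proof -
    have "p k powr q = w k powr q / W powr q" unfolding pw using w0[of k] Wpos by (simp add: powr_divide)
    also have "w k powr q = quad_form a k powr (-(s*q))" unfolding w_def by (simp add: powr_powr)
    finally show ?thesis by simp
  qed
  have pqs: "(\<lambda>k. p k powr q) summable_on UNIV"
  proof -
    have "(\<lambda>k. quad_form a k powr (-(s*q)) * (1 / W powr q)) summable_on UNIV"
      by (rule summable_on_cmult_left) (rule fin_sum[OF a], use s2 sq in simp)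
    then show ?thesis by (simp add: pq)
  qed
  have pq1: "p k powr (q - 1) = W powr (1 - q) * quad_form a k" for k
  proof -
    have "p k powr (q - 1) = w k powr (q - 1) / W powr (q - 1)" unfolding pw using w0[of k] Wpos by (simp add: powr_divide)
    also have "w k powr (q - 1) = quad_form a k powr 1"
    proof -
      have e: "- s * (q - 1) = 1" using s1 by (simp add: algebra_simps)
      show ?thesis unfolding w_def by (simp only: powr_powr e)
    qed
    also have "quad_form a k powr 1 = quad_form a k" using Qpos[of k] by simp
    finally have h: "p k powr (q - 1) = quad_form a k / W powr (q - 1)" .
    have "1 / W powr (q - 1) = W powr (1 - q)" by (simp add: powr_minus_divide[symmetric])
    then show ?thesis unfolding h by (metis times_divide_eq_right mult.commute mult_1_right)
  qed
  have pqrel: "p k powr q = W powr (1 - q) * (quad_form a k * p k)" for k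
  proof -
    have "p k powr q = p k powr (q - 1) * p k powr 1" by (simp only: powr_add[symmetric]) simp
    then show ?thesis using ppos[of k] by (simp add: pq1 mult_ac)
  qed
  define V where "V = 1 + (\<Sum>i\<in>UNIV. u2$i / (a$i)\<^sup>2)"
  have QV: "((\<lambda>k. quad_form a k * r k) has_sum V) UNIV" if fr: "feasible u2 r" for r
  proof -
    from fr have r1: "(r has_sum 1) UNIV" and r2: "\<And>i. ((\<lambda>k. (real_of_int (k$i))\<^sup>2 * r k) has_sum u2$i) UNIV"
      unfolding feasible_def by auto
    have "((\<lambda>k. \<Sum>i\<in>UNIV. (real_of_int (k$i))\<^sup>2 * r k * (1/(a$i)\<^sup>2)) has_sum (\<Sum>i\<in>UNIV. u2$i * (1/(a$i)\<^sup>2))) UNIV"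
      by (intro has_sum_finsum has_sum_cmult_left r2) auto
    then have "((\<lambda>k. r k + (\<Sum>i\<in>UNIV. (real_of_int (k$i))\<^sup>2 * r k * (1/(a$i)\<^sup>2))) has_sum (1 + (\<Sum>i\<in>UNIV. u2$i * (1/(a$i)\<^sup>2)))) UNIV"
      by (intro has_sum_add r1)
    moreover have "quad_form a k * r k = r k + (\<Sum>i\<in>UNIV. (real_of_int (k$i))\<^sup>2 * r k * (1/(a$i)\<^sup>2))" for k
      unfolding quad_form_def by (simp add: ring_distribs sum_distrib_right)
    ultimately show ?thesis by (simp add: V_def)
  qed
  have pqsum: "((\<lambda>k. p k powr q) has_sum (W powr (1 - q) * V)) UNIV"
    using has_sum_cmult_right[OF QV[OF feas], of "W powr (1 - q)"] by (simp add: pqrel)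
  have main: "(\<lambda>k. p' k powr q) summable_on UNIV \<and> tsallis q p' \<le> tsallis q p" if fp: "feasible u2 p'" for p'
  proof -
    have p'0: "p' k \<ge> 0" for k using fp unfolding feasible_def by auto
    have bound: "p' k powr q \<le> (1 - q) * p k powr q + q * W powr (1 - q) * (quad_form a k * p' k)" for k
      using tangent[OF p'0[of k] ppos[of k] q] by (simp add: pq1 mult_ac)
    have R: "((\<lambda>k. (1 - q) * p k powr q + q * W powr (1 - q) * (quad_form a k * p' k)) has_sum
              ((1 - q) * (W powr (1 - q) * V) + q * W powr (1 - q) * V)) UNIV"
      by (intro has_sum_add has_sum_cmult_right pqsum QV fp)
    have Rv: "(1 - q) * (W powr (1 - q) * V) + q * W powr (1 - q) * V = W powr (1 - q) * V"
      by (simp add: algebra_simps)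
    have sm: "(\<lambda>k. p' k powr q) summable_on UNIV"
      by (rule summable_on_comparison_test[OF has_sum_imp_summable[OF R] bound]) simp
    have "infsum (\<lambda>k. p' k powr q) UNIV \<le> W powr (1 - q) * V"
      using has_sum_mono[OF has_sum_infsum[OF sm] R bound] Rv by simp
    also have "\<dots> = infsum (\<lambda>k. p k powr q) UNIV" using pqsum by (simp add: infsumI)
    finally have le: "infsum (\<lambda>k. p' k powr q) UNIV \<le> infsum (\<lambda>k. p k powr q) UNIV" .
    have "1 / (q - 1) < 0" using q by simp
    then have "1 / (q - 1) * (1 - infsum (\<lambda>k. p' k powr q) UNIV) \<le> 1 / (q - 1) * (1 - infsum (\<lambda>k. p k powr q) UNIV)"
      using le by (intro mult_left_mono_neg) auto
    then show ?thesis using sm unfolding tsallis_def by simp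
  qed
  show ?thesis unfolding Let_def p_def[symmetric] u2_def[symmetric] using feas pqs main by blast
qed



theorem theorem8:
  fixes q m :: real
  assumes "real CARD('n) / (real CARD('n) + 2) < q" and "q < 1"
    and "m = 2 / (1 - q) - real CARD('n)"
  shows "(\<forall>a::real^'n. (\<forall>i. a$i > 0) \<longrightarrow>
           (let p = p_md m a;
                u2 = (\<chi> i. \<Sum>\<^sub>\<infinity>k. (real_of_int (k$i))^2 * p k)
            in feasible u2 p \<and> (\<lambda>k. p k powr q) summable_on UNIV \<and>
               (\<forall>p'. feasible u2 p' \<longrightarrow>
                   (\<lambda>k. p' k powr q) summable_on UNIV \<and> tsallis q p' \<le> tsallis q p)))
       \<and> (\<forall>\<epsilon>>0. \<exists>M. \<forall>a::real^'n. (\<forall>i. a$i \<ge> M) \<longrightarrow>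
           \<bar>f_md m a / (\<Prod>i\<in>UNIV. a$i)
             - pi powr (real CARD('n) / 2) * Gamma (m / 2) / Gamma ((m + real CARD('n)) / 2)\<bar> < \<epsilon>)"
proof -
  define d where "d = real CARD('n)"
  have d1: "d \<ge> 1" unfolding d_def by (simp add: Suc_le_eq)
  have qd: "d < q * (d + 2)" using assms(1) d1 unfolding d_def[symmetric] by (simp add: divide_less_eq)
  have q0: "q > 0"
  proof (rule ccontr)
    assume "\<not> q > 0"
    then have "q * (d + 2) \<le> 0" using d1 by (simp add: mult_nonpos_nonneg)
    then show False using qd d1 by linarith
  qed
  have q1: "1 - q > 0" using assms(2) by simp
  define s where "s = (m + real CARD('n)) / 2"
  have s1: "s * (1 - q) = 1" unfolding s_def assms(3) using q1 by (simp add: field_simps)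
  have s2: "s - 1 > d / 2"
  proof (rule ccontr)
    assume "\<not> s - 1 > d / 2"
    then have "(s - 1) * (1 - q) \<le> d / 2 * (1 - q)" using q1 by (intro mult_right_mono) auto
    moreover have "(s - 1) * (1 - q) = q" using s1 by (simp add: algebra_simps)
    ultimately have "q \<le> d / 2 * (1 - q)" by simp
    then show False using qd by (simp add: algebra_simps)
  qed
  have s0: "s > real CARD('n) / 2" using s2 unfolding d_def by linarith
  have es: "-(m + real CARD('n)) / 2 = -s" unfolding s_def by linarith
  have G: "Gamma s > 0" using s0 by (intro Gamma_real_pos) (smt (verit) of_nat_0_le_iff divide_nonneg_pos)
  show ?thesis
  proof (intro conjI allI impI)
    fix a :: "real^'n" assume a: "\<forall>i. a$i > 0"
    show "let p = p_md m a; u2 = (\<chi> i. \<Sum>\<^sub>\<infinity>k. (real_of_int (k$i))^2 * p k)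
         in feasible u2 p \<and> (\<lambda>k. p k powr q) summable_on UNIV \<and>
            (\<forall>p'. feasible u2 p' \<longrightarrow> (\<lambda>k. p' k powr q) summable_on UNIV \<and> tsallis q p' \<le> tsallis q p)"
      by (rule part_a[OF q0 assms(2) s_def s1 _ a]) (use s2 in \<open>simp add: d_def\<close>)
  next
    fix \<epsilon> :: real assume e: "\<epsilon> > 0"
    define K0 where "K0 = real CARD('n) * 3 ^ (CARD('n) - 1) * (Gamma s + Gamma (s - real (CARD('n) - 1) / 2))"
    have K00: "K0 \<ge> 0"
    proof -
      have "s - real (CARD('n) - 1) / 2 > 0" using s0 by (simp add: of_nat_diff)
      then have "Gamma (s - real (CARD('n) - 1) / 2) > 0" by (rule Gamma_real_pos)
      then show ?thesis unfolding K0_def using G by simp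
    qed
    define M where "M = max 1 (K0 / (\<epsilon> * Gamma s) + 1)"
    have M1: "M \<ge> 1" unfolding M_def by simp
    have KM: "K0 / (M * Gamma s) < \<epsilon>"
    proof -
      have "K0 / (\<epsilon> * Gamma s) < M" unfolding M_def by simp
      then have "K0 < M * (\<epsilon> * Gamma s)" using e G by (simp add: divide_less_eq)
      then show ?thesis using e G M1 by (simp add: divide_less_eq mult_ac)
    qed
    show "\<exists>M. \<forall>a::real^'n. (\<forall>i. a$i \<ge> M) \<longrightarrow>
           \<bar>f_md m a / (\<Prod>i\<in>UNIV. a$i)
             - pi powr (real CARD('n) / 2) * Gamma (m / 2) / Gamma ((m + real CARD('n)) / 2)\<bar> < \<epsilon>"
    proof (intro exI allI impI)
      fix a :: "real^'n" assume a: "\<forall>i. a$i \<ge> M"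
      have apos: "\<forall>i. a$i > 0" using a M1 by (smt (verit))
      obtain fr where fr: "(\<integral>\<^sup>+k. ennreal (quad_form a k powr (-s)) \<partial>count_space UNIV) = ennreal fr"
        and fr0: "fr \<ge> 0"
        and bd: "\<bar>fr / (\<Prod>i\<in>UNIV. a$i) - pi powr (real CARD('n) / 2) * Gamma (s - real CARD('n) / 2) / Gamma s\<bar>
          \<le> real CARD('n) * 3 ^ (CARD('n) - 1) * (Gamma s + Gamma (s - real (CARD('n) - 1) / 2)) / (M * Gamma s)"
        using asym[OF s0 M1 a] by blast
      have "f_md m a = infsum (\<lambda>k. quad_form a k powr (-s)) UNIV" unfolding f_md_def es ..
      also have "\<dots> = enn2real (\<integral>\<^sup>+k. ennreal (quad_form a k powr (-s)) \<partial>count_space UNIV)"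
        by (rule bridge(2)) (auto simp: fr)
      also have "\<dots> = fr" using fr fr0 by simp
      finally have ff: "f_md m a = fr" .
      have e1: "s - real CARD('n) / 2 = m / 2" unfolding s_def by (simp add: field_simps)
      have e2: "s = (m + real CARD('n)) / 2" by (rule s_def)
      show "\<bar>f_md m a / (\<Prod>i\<in>UNIV. a$i)
             - pi powr (real CARD('n) / 2) * Gamma (m / 2) / Gamma ((m + real CARD('n)) / 2)\<bar> < \<epsilon>"
        using bd KM unfolding ff e1 K0_def e2[symmetric] by linarith
    qed
  qed
qed


end
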